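(* Let $G=(V,E)$ be an acyclic finite directed graph, $\Gamma\subset V$ a subset containing all sinks and sources of $G$ with $V\setminus\Gamma\neq\emptyset$, and $z\in\mathrm{Sym}_d^\Gamma$. For $x\in\mathrm{Sym}_d^V(z)$, both $\phi_d(x)\to\infty$ and $\chi_d(x)\to\infty$ as $\|x\|\to\infty$, where $\|\cdot\|$ is any norm on $\mathrm{Sym}_d^V$.
   Context: Edges are ordered pairs $(v,w)$ with $v\neq w$, written $v\to w$; a sink has no outgoing edges, a source no incoming edges; acyclic means no directed cycles. $\mathrm{Sym}_d$ is the space of $d\times d$ real symmetric matrices, $\mathrm{Sym}_d^V$ arrays $x=(x_v)_{v\in V}$, and $\mathrm{Sym}_d^V(z)=\{x\in\mathrm{Sym}_d^V:x_v=z_v\ \forall v\in\Gamma\}$. $\phi_d(x)=\sum_{v\to w}\operatorname{tr}[e^{x_v}e^{-x_w}]$ and $\chi_d(x)=\sum_{v\to w}\operatorname{tr}[e^{x_v-x_w}]$ (matrix exponentials). *)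

theory Defs
  imports "HOL-Analysis.Analysis"
begin

text \<open>d x d real matrices are rendered as real^'d^'d (d = CARD('d)).\<close>

definition sym_mat :: "real^'d^'d \<Rightarrow> bool" where
  "sym_mat A \<longleftrightarrow> transpose A = A"

primrec matpow :: "real^'d^'d \<Rightarrow> nat \<Rightarrow> real^'d^'d" where
  "matpow A 0 = mat 1"
| "matpow A (Suc n) = A ** matpow A n"

definition mexp :: "real^'d^'d \<Rightarrow> real^'d^'d" where
  "mexp A = (\<Sum>n. (1 / fact n) *\<^sub>R matpow A n)"

text \<open>Graph G = (V,E) with vertex type 'v (finite), V = UNIV, edge relation E.\<close>
definition is_sink :: "('v \<times> 'v) set \<Rightarrow> 'v \<Rightarrow> bool" where
  "is_sink E v \<longleftrightarrow> (\<forall>w. (v, w) \<notin> E)"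

definition is_source :: "('v \<times> 'v) set \<Rightarrow> 'v \<Rightarrow> bool" where
  "is_source E v \<longleftrightarrow> (\<forall>w. (w, v) \<notin> E)"

definition SymV :: "(real^'d^'d^'v) set" where
  "SymV = {x. \<forall>v. sym_mat (x $ v)}"

definition SymV_bd :: "'v set \<Rightarrow> ('v \<Rightarrow> real^'d^'d) \<Rightarrow> (real^'d^'d^'v) set" where
  "SymV_bd \<Gamma> z = {x \<in> SymV. \<forall>v\<in>\<Gamma>. x $ v = z v}"

definition phi :: "('v \<times> 'v) set \<Rightarrow> real^'d^'d^'v \<Rightarrow> real" where
  "phi E x = (\<Sum>(v, w)\<in>E. trace (mexp (x $ v) ** mexp (- (x $ w))))"

definition chi :: "('v \<times> 'v) set \<Rightarrow> real^'d^'d^'v \<Rightarrow> real" where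
  "chi E x = (\<Sum>(v, w)\<in>E. trace (mexp (x $ v - x $ w)))"

definition is_norm_on :: "'a::real_vector set \<Rightarrow> ('a \<Rightarrow> real) \<Rightarrow> bool" where
  "is_norm_on S N \<longleftrightarrow>
     (\<forall>x\<in>S. 0 \<le> N x) \<and> (\<forall>x\<in>S. N x = 0 \<longleftrightarrow> x = 0) \<and>
     (\<forall>x\<in>S. \<forall>y\<in>S. N (x + y) \<le> N x + N y) \<and>
     (\<forall>c. \<forall>x\<in>S. N (c *\<^sub>R x) = \<bar>c\<bar> * N x)"

end

theory Submission
  imports Defs
begin



lemma norm_sq_mat: "(norm (A::real^'n^'m))^2 = (\<Sum>i\<in>UNIV. \<Sum>j\<in>UNIV. (A$i$j)^2)"
  unfolding power2_norm_eq_inner by (simp add: inner_vec_def power2_eq_square)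

lemma norm_sq_vec: "(norm (x::real^'n))^2 = (\<Sum>i\<in>UNIV. (x$i)^2)"
  unfolding power2_norm_eq_inner by (simp add: inner_vec_def power2_eq_square)

lemma norm_transpose: "norm (transpose (A::real^'n^'m)) = norm A"
proof -
  have "(norm (transpose A))^2 = (\<Sum>i\<in>UNIV. \<Sum>j\<in>UNIV. (A$j$i)^2)"
    unfolding norm_sq_mat transpose_def by simp
  also have "\<dots> = (\<Sum>j\<in>UNIV. \<Sum>i\<in>UNIV. (A$j$i)^2)" by (rule sum.swap)
  also have "\<dots> = (norm A)^2" by (simp add: norm_sq_mat)
  finally have "(norm (transpose A))^2 = (norm A)^2" .
  then show ?thesis by (simp add: power2_eq_iff_nonneg)
qed

lemma mat_mult_entry: "((A::real^'n^'m) ** B)$i$j = inner (A$i) (column j B)"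
  by (simp add: matrix_matrix_mult_def inner_vec_def column_def)

lemma norm_col_sum: "(\<Sum>j\<in>UNIV. (norm (column j (B::real^'n^'m)))^2) = (norm B)^2"
proof -
  have "(\<Sum>j\<in>UNIV. (norm (column j B))^2) = (norm (transpose B))^2"
    unfolding norm_sq_mat norm_sq_vec by (simp add: transpose_def column_def)
  then show ?thesis by (simp add: norm_transpose)
qed

lemma norm_row_sum: "(\<Sum>i\<in>UNIV. (norm ((A::real^'n^'m)$i))^2) = (norm A)^2"
  unfolding norm_sq_mat norm_sq_vec by simp

lemma norm_mat_mult: "norm ((A::real^'n^'m) ** (B::real^'p^'n)) \<le> norm A * norm B"
proof -
  have "(norm (A ** B))^2 = (\<Sum>i\<in>UNIV. \<Sum>j\<in>UNIV. (inner (A$i) (column j B))^2)"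
    unfolding norm_sq_mat mat_mult_entry ..
  also have "\<dots> \<le> (\<Sum>i\<in>UNIV. \<Sum>j\<in>UNIV. (norm (A$i))^2 * (norm (column j B))^2)"
  proof (intro sum_mono)
    fix i j
    have "\<bar>inner (A$i) (column j B)\<bar> \<le> norm (A$i) * norm (column j B)"
      by (rule Cauchy_Schwarz_ineq2)
    then have "\<bar>inner (A$i) (column j B)\<bar>^2 \<le> (norm (A$i) * norm (column j B))^2"
      by (intro power_mono) auto
    then show "(inner (A$i) (column j B))^2 \<le> (norm (A$i))^2 * (norm (column j B))^2"
      by (simp add: power_mult_distrib)
  qed
  also have "\<dots> = (\<Sum>i\<in>UNIV. (norm (A$i))^2) * (\<Sum>j\<in>UNIV. (norm (column j B))^2)"
    by (simp add: sum_product)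
  also have "\<dots> = (norm A * norm B)^2"
    by (simp add: norm_col_sum norm_row_sum power_mult_distrib)
  finally show ?thesis
    by (rule power2_le_imp_le) auto
qed

lemma norm_mat_vec: "norm ((A::real^'n^'m) *v x) \<le> norm A * norm x"
proof -
  have "(norm (A *v x))^2 = (\<Sum>i\<in>UNIV. (inner (A$i) x)^2)"
    unfolding norm_sq_vec matrix_vector_mul_component ..
  also have "\<dots> \<le> (\<Sum>i\<in>UNIV. (norm (A$i))^2 * (norm x)^2)"
  proof (intro sum_mono)
    fix i
    have "\<bar>inner (A$i) x\<bar> \<le> norm (A$i) * norm x"
      by (rule Cauchy_Schwarz_ineq2)
    then have "\<bar>inner (A$i) x\<bar>^2 \<le> (norm (A$i) * norm x)^2"
      by (intro power_mono) auto
    then show "(inner (A$i) x)^2 \<le> (norm (A$i))^2 * (norm x)^2"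
      by (simp add: power_mult_distrib)
  qed
  also have "\<dots> = (norm A * norm x)^2"
    by (simp add: sum_distrib_right[symmetric] norm_row_sum power_mult_distrib)
  finally show ?thesis
    by (rule power2_le_imp_le) auto
qed

lemma bb_mult: "bounded_bilinear ((**) :: real^'n^'m \<Rightarrow> real^'p^'n \<Rightarrow> real^'p^'m)"
proof
  fix a a' :: "real^'n^'m" and b b' :: "real^'p^'n" and r :: real
  show "(a + a') ** b = a ** b + a' ** b"
    by (simp add: matrix_matrix_mult_def vec_eq_iff sum.distrib distrib_right)
  show "a ** (b + b') = a ** b + a ** b'"
    by (simp add: matrix_add_ldistrib)
  show "r *\<^sub>R a ** b = r *\<^sub>R (a ** b)"
    by (simp add: scalar_matrix_assoc)
  show "a ** r *\<^sub>R b = r *\<^sub>R (a ** b)"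
    by (simp add: matrix_scalar_ac scalar_matrix_assoc)
next
  show "\<exists>K. \<forall>a b. norm ((a::real^'n^'m) ** (b::real^'p^'n)) \<le> norm a * norm b * K"
    by (rule exI[of _ 1]) (simp add: norm_mat_mult)
qed




lemma matpow_Suc': "matpow A (Suc n) = matpow A n ** A"
  by (induction n) (simp_all add: matrix_mul_assoc)

lemma matpow_add: "matpow A (m + n) = matpow A m ** matpow A n"
  by (induction m) (simp_all add: matrix_mul_assoc)

lemma matpow_scale: "matpow (c *\<^sub>R A) n = c ^ n *\<^sub>R matpow A n"
  by (induction n) (simp_all add: matrix_scalar_ac scalar_matrix_assoc[symmetric])

lemma matpow_comm: "A ** matpow A n = matpow A n ** A"
  using matpow_Suc'[of A n] by simp

lemma transpose_matpow: "transpose (matpow A n) = matpow (transpose A) n"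
  by (induction n) (simp_all add: matrix_transpose_mul matpow_comm)

lemma norm_matpow: "norm (matpow (A::real^'d^'d) n) \<le> norm (mat 1 :: real^'d^'d) * norm A ^ n"
proof (induction n)
  case 0 then show ?case by simp
next
  case (Suc n)
  have "norm (matpow A (Suc n)) \<le> norm A * norm (matpow A n)"
    by (simp add: norm_mat_mult)
  also have "\<dots> \<le> norm A * (norm (mat 1 :: real^'d^'d) * norm A ^ n)"
    by (intro mult_left_mono Suc.IH) auto
  finally show ?case by (simp add: algebra_simps)
qed

lemma summable_norm_mexp: "summable (\<lambda>n. norm ((1 / fact n) *\<^sub>R matpow (A::real^'d^'d) n))"
proof (rule summable_comparison_test)
  show "\<exists>N. \<forall>n\<ge>N. norm (norm ((1 / fact n) *\<^sub>R matpow A n)) \<le> norm (mat 1 :: real^'d^'d) * (norm A ^ n / fact n)"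
  proof (intro exI allI impI)
    fix n :: nat
    have "norm (norm ((1 / fact n) *\<^sub>R matpow A n)) = norm (matpow A n) / fact n"
      by simp
    also have "\<dots> \<le> (norm (mat 1 :: real^'d^'d) * norm A ^ n) / fact n"
      by (intro divide_right_mono norm_matpow) auto
    finally show "norm (norm ((1 / fact n) *\<^sub>R matpow A n)) \<le> norm (mat 1 :: real^'d^'d) * (norm A ^ n / fact n)"
      by simp
  qed
  show "summable (\<lambda>n. norm (mat 1 :: real^'d^'d) * (norm A ^ n / fact n))"
    using summable_exp[of "norm A"] by (intro summable_mult) (simp add: divide_inverse mult.commute)
qed

lemma mexp_sums: "(\<lambda>n. (1 / fact n) *\<^sub>R matpow (A::real^'d^'d) n) sums mexp A"
  unfolding mexp_def using summable_norm_cancel[OF summable_norm_mexp] by (rule summable_sums)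

lemma bl_mexp_sums: "bounded_linear f \<Longrightarrow> (\<lambda>n. f ((1 / fact n) *\<^sub>R matpow (A::real^'d^'d) n)) sums f (mexp A)"
  by (rule bounded_linear.sums[OF _ mexp_sums])

lemma bl_transpose: "bounded_linear (transpose :: real^'n^'m \<Rightarrow> real^'m^'n)"
proof -
  have "linear (transpose :: real^'n^'m \<Rightarrow> real^'m^'n)"
    by (rule linearI) (simp_all add: transpose_def vec_eq_iff)
  then show ?thesis by (simp add: linear_conv_bounded_linear)
qed

lemma mexp_transpose: "transpose (mexp A) = mexp (transpose (A::real^'d^'d))"
proof -
  have "(\<lambda>n. transpose ((1 / fact n) *\<^sub>R matpow A n)) sums transpose (mexp A)"
    by (rule bl_mexp_sums[OF bl_transpose])
  moreover have "(\<lambda>n. transpose ((1 / fact n) *\<^sub>R matpow A n)) = (\<lambda>n. (1 / fact n) *\<^sub>R matpow (transpose A) n)"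
    by (simp add: transpose_scalar transpose_matpow)
  ultimately show ?thesis using mexp_sums sums_unique2 by metis
qed

lemma sym_matpow: "sym_mat A \<Longrightarrow> sym_mat (matpow A n)"
  by (simp add: sym_mat_def transpose_matpow)

lemma sym_mexp: "sym_mat A \<Longrightarrow> sym_mat (mexp (A::real^'d^'d))"
  by (simp add: sym_mat_def mexp_transpose)

lemma mexp_zero: "mexp (0::real^'d^'d) = mat 1"
proof -
  have "(\<lambda>n. (1 / fact n) *\<^sub>R matpow (0::real^'d^'d) n) = (\<lambda>n. if n = 0 then mat 1 else 0)"
    by (rule ext, case_tac n) simp_all
  then have "(\<lambda>n. (1 / fact n) *\<^sub>R matpow (0::real^'d^'d) n) sums mat 1"
    using sums_single[of 0 "\<lambda>_. mat 1 :: real^'d^'d"] by simp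
  then show ?thesis using mexp_sums sums_unique2 by metis
qed

lemma Cauchy_product_sums_mat:
  fixes a b :: "nat \<Rightarrow> real^'d^'d"
  assumes a: "summable (\<lambda>k. norm (a k))"
    and b: "summable (\<lambda>k. norm (b k))"
  shows "(\<lambda>k. \<Sum>i\<le>k. a i ** b (k - i)) sums ((\<Sum>k. a k) ** (\<Sum>k. b k))"
proof -
  let ?S1 = "\<lambda>n::nat. {..<n} \<times> {..<n}"
  let ?S2 = "\<lambda>n::nat. {(i,j). i + j < n}"
  have S1_mono: "\<And>m n. m \<le> n \<Longrightarrow> ?S1 m \<subseteq> ?S1 n" by auto
  have S2_le_S1: "\<And>n. ?S2 n \<subseteq> ?S1 n" by auto
  have S1_le_S2: "\<And>n. ?S1 (n div 2) \<subseteq> ?S2 n" by auto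
  have finite_S1: "\<And>n. finite (?S1 n)" by simp
  with S2_le_S1 have finite_S2: "\<And>n. finite (?S2 n)" by (rule finite_subset)
  let ?g = "\<lambda>(i,j). a i ** b j"
  let ?f = "\<lambda>(i,j). norm (a i) * norm (b j)"
  have f_nonneg: "\<And>x. 0 \<le> ?f x" by auto
  then have norm_sum_f: "\<And>A. norm (sum ?f A) = sum ?f A"
    unfolding real_norm_def
    by (simp only: abs_of_nonneg sum_nonneg [rule_format])
  have sp: "\<And>n. (\<Sum>k<n. a k) ** (\<Sum>k<n. b k) = sum ?g (?S1 n)"
  proof -
    fix n
    have "(\<Sum>k<n. a k) ** (\<Sum>k<n. b k) = (\<Sum>i<n. a i ** (\<Sum>k<n. b k))"
      by (rule bounded_bilinear.sum_left[OF bb_mult])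
    also have "\<dots> = (\<Sum>i<n. \<Sum>j<n. a i ** b j)"
      by (simp only: bounded_bilinear.sum_right[OF bb_mult])
    also have "\<dots> = sum ?g (?S1 n)"
      by (rule sum.cartesian_product)
    finally show "(\<Sum>k<n. a k) ** (\<Sum>k<n. b k) = sum ?g (?S1 n)" .
  qed
  have "(\<lambda>n. (\<Sum>k<n. a k) ** (\<Sum>k<n. b k)) \<longlonglongrightarrow> (\<Sum>k. a k) ** (\<Sum>k. b k)"
    by (intro bounded_bilinear.tendsto[OF bb_mult] summable_LIMSEQ summable_norm_cancel [OF a] summable_norm_cancel [OF b])
  then have 1: "(\<lambda>n. sum ?g (?S1 n)) \<longlonglongrightarrow> (\<Sum>k. a k) ** (\<Sum>k. b k)"
    by (simp only: sp)
  have "(\<lambda>n. (\<Sum>k<n. norm (a k)) * (\<Sum>k<n. norm (b k))) \<longlonglongrightarrow> (\<Sum>k. norm (a k)) * (\<Sum>k. norm (b k))"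
    using a b by (intro tendsto_mult summable_LIMSEQ)
  then have "(\<lambda>n. sum ?f (?S1 n)) \<longlonglongrightarrow> (\<Sum>k. norm (a k)) * (\<Sum>k. norm (b k))"
    by (simp only: sum_product sum.Sigma [rule_format] finite_lessThan)
  then have "convergent (\<lambda>n. sum ?f (?S1 n))"
    by (rule convergentI)
  then have Cauchy: "Cauchy (\<lambda>n. sum ?f (?S1 n))"
    by (rule convergent_Cauchy)
  have "Zfun (\<lambda>n. sum ?f (?S1 n - ?S2 n)) sequentially"
  proof (rule ZfunI, simp only: eventually_sequentially norm_sum_f)
    fix r :: real
    assume r: "0 < r"
    from CauchyD [OF Cauchy r] obtain N
      where "\<forall>m\<ge>N. \<forall>n\<ge>N. norm (sum ?f (?S1 m) - sum ?f (?S1 n)) < r" ..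
    then have "\<And>m n. N \<le> n \<Longrightarrow> n \<le> m \<Longrightarrow> norm (sum ?f (?S1 m - ?S1 n)) < r"
      by (simp only: sum_diff finite_S1 S1_mono)
    then have N: "\<And>m n. N \<le> n \<Longrightarrow> n \<le> m \<Longrightarrow> sum ?f (?S1 m - ?S1 n) < r"
      by (simp only: norm_sum_f)
    show "\<exists>N. \<forall>n\<ge>N. sum ?f (?S1 n - ?S2 n) < r"
    proof (intro exI allI impI)
      fix n
      assume "2 * N \<le> n"
      then have n: "N \<le> n div 2" by simp
      have "sum ?f (?S1 n - ?S2 n) \<le> sum ?f (?S1 n - ?S1 (n div 2))"
        by (intro sum_mono2 finite_Diff finite_S1 f_nonneg Diff_mono subset_refl S1_le_S2)
      also have "\<dots> < r"
        using n div_le_dividend by (rule N)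
      finally show "sum ?f (?S1 n - ?S2 n) < r" .
    qed
  qed
  then have "Zfun (\<lambda>n. sum ?g (?S1 n - ?S2 n)) sequentially"
    apply (rule Zfun_le [rule_format])
    apply (simp only: norm_sum_f)
    apply (rule order_trans [OF norm_sum sum_mono])
    apply (auto simp add: norm_mat_mult)
    done
  then have 2: "(\<lambda>n. sum ?g (?S1 n) - sum ?g (?S2 n)) \<longlonglongrightarrow> 0"
    unfolding tendsto_Zfun_iff diff_0_right
    by (simp only: sum_diff finite_S1 S2_le_S1)
  with 1 have "(\<lambda>n. sum ?g (?S2 n)) \<longlonglongrightarrow> (\<Sum>k. a k) ** (\<Sum>k. b k)"
    by (rule Lim_transform2)
  then show ?thesis
    by (simp only: sums_def sum.triangle_reindex)
qed

lemma binom_fact_sum: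
  "(\<Sum>i\<le>k. s ^ i * t ^ (k - i) / (fact i * fact (k - i))) = ((s::real) + t) ^ k / fact k"
proof -
  have "(s + t) ^ k = (\<Sum>i\<le>k. of_nat (k choose i) * s ^ i * t ^ (k - i))"
    by (rule binomial_ring)
  also have "\<dots> = (\<Sum>i\<le>k. fact k * (s ^ i * t ^ (k - i) / (fact i * fact (k - i))))"
    by (intro sum.cong refl) (simp add: binomial_fact)
  also have "\<dots> = fact k * (\<Sum>i\<le>k. s ^ i * t ^ (k - i) / (fact i * fact (k - i)))"
    by (simp add: sum_distrib_left)
  finally show ?thesis by simp
qed

lemma mexp_add_scale:
  "mexp (s *\<^sub>R A) ** mexp (t *\<^sub>R A) = mexp ((s + t) *\<^sub>R (A::real^'d^'d))"
proof -
  let ?a = "\<lambda>n. (1 / fact n) *\<^sub>R matpow (s *\<^sub>R A) n"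
  let ?b = "\<lambda>n. (1 / fact n) *\<^sub>R matpow (t *\<^sub>R A) n"
  have "(\<lambda>k. \<Sum>i\<le>k. ?a i ** ?b (k - i)) sums ((\<Sum>k. ?a k) ** (\<Sum>k. ?b k))"
    by (rule Cauchy_product_sums_mat[OF summable_norm_mexp summable_norm_mexp])
  moreover have "(\<Sum>k. ?a k) = mexp (s *\<^sub>R A)" "(\<Sum>k. ?b k) = mexp (t *\<^sub>R A)"
    by (simp_all add: mexp_def)
  moreover have "(\<lambda>k. \<Sum>i\<le>k. ?a i ** ?b (k - i)) = (\<lambda>k. (1 / fact k) *\<^sub>R matpow ((s + t) *\<^sub>R A) k)"
  proof
    fix k
    have "(\<Sum>i\<le>k. ?a i ** ?b (k - i)) = (\<Sum>i\<le>k. (s ^ i * t ^ (k - i) / (fact i * fact (k - i))) *\<^sub>R matpow A k)"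
    proof (intro sum.cong refl)
      fix i assume "i \<in> {..k}"
      then have "matpow A i ** matpow A (k - i) = matpow A k"
        by (simp add: matpow_add[symmetric])
      then show "?a i ** ?b (k - i) = (s ^ i * t ^ (k - i) / (fact i * fact (k - i))) *\<^sub>R matpow A k"
        by (simp add: matpow_scale matrix_scalar_ac scalar_matrix_assoc[symmetric] mult_ac)
    qed
    also have "\<dots> = ((s + t) ^ k / fact k) *\<^sub>R matpow A k"
      by (simp add: scaleR_sum_left[symmetric] binom_fact_sum)
    finally show "(\<Sum>i\<le>k. ?a i ** ?b (k - i)) = (1 / fact k) *\<^sub>R matpow ((s + t) *\<^sub>R A) k"
      by (simp add: matpow_scale)
  qed
  ultimately show ?thesis using mexp_sums sums_unique2 by metis
qed




lemma inner_sym: "sym_mat (S::real^'d^'d) \<Longrightarrow> inner u (S *v w) = inner (S *v u) w"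
proof -
  assume "sym_mat S"
  then have "S *v u = u v* S"
    by (metis sym_mat_def transpose_matrix_vector)
  then show ?thesis by (simp add: dot_lmul_matrix)
qed

lemma trace_tsq: "trace (transpose X ** (X::real^'d^'d)) = (norm X)^2"
proof -
  have "trace (transpose X ** X) = (\<Sum>i\<in>UNIV. \<Sum>k\<in>UNIV. (X$k$i)^2)"
    by (simp add: trace_def matrix_matrix_mult_def transpose_def power2_eq_square)
  also have "\<dots> = (\<Sum>k\<in>UNIV. \<Sum>i\<in>UNIV. (X$k$i)^2)" by (rule sum.swap)
  also have "\<dots> = (norm X)^2" by (simp add: norm_sq_mat)
  finally show ?thesis .
qed

lemma trace_sq_sym: "sym_mat (S::real^'d^'d) \<Longrightarrow> trace (S ** S) = (norm S)^2"
  using trace_tsq[of S] by (simp add: sym_mat_def)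

lemma sym_scale: "sym_mat A \<Longrightarrow> sym_mat (c *\<^sub>R (A::real^'d^'d))"
  by (simp add: sym_mat_def transpose_scalar)

lemma sym_neg: "sym_mat A \<Longrightarrow> sym_mat (- (A::real^'d^'d))"
  using sym_scale[of A "-1"] by simp

lemma sym_diff: "sym_mat A \<Longrightarrow> sym_mat B \<Longrightarrow> sym_mat ((A::real^'d^'d) - B)"
  by (simp add: sym_mat_def transpose_def vec_eq_iff)

lemma mexp_split: "mexp ((s + t) *\<^sub>R (A::real^'d^'d)) = mexp (s *\<^sub>R A) ** mexp (t *\<^sub>R A)"
  by (simp add: mexp_add_scale)

lemma mexp_half: "mexp (A::real^'d^'d) = mexp ((1/2) *\<^sub>R A) ** mexp ((1/2) *\<^sub>R A)"
  using mexp_split[of "1/2" "1/2" A] by simp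

lemma trace_mexp: "sym_mat A \<Longrightarrow> trace (mexp (A::real^'d^'d)) = (norm (mexp ((1/2) *\<^sub>R A)))^2"
  by (metis mexp_half trace_sq_sym sym_mexp sym_scale)

lemma trace_mexp_nonneg: "sym_mat A \<Longrightarrow> 0 \<le> trace (mexp (A::real^'d^'d))"
  by (simp add: trace_mexp)

lemma tr_ratio:
  assumes A: "sym_mat (A::real^'d^'d)" and B: "sym_mat B"
  shows "trace (mexp A) \<le> trace (mexp A ** mexp (- B)) * trace (mexp B)"
proof -
  define S where "S = mexp ((1/2) *\<^sub>R A)"
  define T where "T = mexp ((-1/2) *\<^sub>R B)"
  define U where "U = mexp ((1/2) *\<^sub>R B)"
  have Ss: "sym_mat S" unfolding S_def by (intro sym_mexp sym_scale A)
  have Ts: "sym_mat T" unfolding T_def by (intro sym_mexp sym_scale B)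
  have Us: "sym_mat U" unfolding U_def by (intro sym_mexp sym_scale B)
  have eA: "mexp A = S ** S" unfolding S_def by (rule mexp_half)
  have eB: "mexp B = U ** U" unfolding U_def by (rule mexp_half)
  have enB: "mexp (- B) = T ** T"
    unfolding T_def using mexp_split[of "-1/2" "-1/2" B] by simp
  have TU: "T ** U = mat 1"
    unfolding T_def U_def using mexp_split[of "-1/2" "1/2" B] by (simp add: mexp_zero)
  have "trace (mexp A ** mexp (- B)) = trace (((S ** S) ** T) ** T)"
    by (simp add: eA enB matrix_mul_assoc)
  also have "\<dots> = trace (T ** ((S ** S) ** T))"
    by (rule trace_mul_sym)
  also have "\<dots> = trace (transpose (S ** T) ** (S ** T))"
    using Ss Ts by (simp add: matrix_transpose_mul sym_mat_def matrix_mul_assoc)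
  also have "\<dots> = (norm (S ** T))^2" by (rule trace_tsq)
  finally have 1: "trace (mexp A ** mexp (- B)) = (norm (S ** T))^2" .
  have "S = (S ** T) ** U" by (simp add: TU matrix_mul_assoc[symmetric])
  then have "norm S \<le> norm (S ** T) * norm U" by (metis norm_mat_mult)
  then have "(norm S)^2 \<le> (norm (S ** T) * norm U)^2"
    by (intro power_mono) auto
  then show ?thesis
    using 1 by (simp add: eA eB trace_sq_sym Ss Us power_mult_distrib
        trace_mexp[OF A, folded S_def] trace_mexp[OF B, folded U_def])
qed

lemma quad_psd_le:
  assumes "sym_mat (S::real^'d^'d)"
  shows "inner u ((S ** S) *v u) = (norm (S *v u))^2"
    and "inner u ((S ** S) *v u) \<le> (norm u)^2 * trace (S ** S)"
proof -
  have "inner u ((S ** S) *v u) = inner u (S *v (S *v u))"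
    by (simp add: matrix_vector_mul_assoc)
  also have "\<dots> = inner (S *v u) (S *v u)" by (rule inner_sym[OF assms])
  finally show eq: "inner u ((S ** S) *v u) = (norm (S *v u))^2"
    by (simp add: power2_norm_eq_inner)
  have "norm (S *v u) \<le> norm S * norm u" by (rule norm_mat_vec)
  then have "(norm (S *v u))^2 \<le> (norm S * norm u)^2" by (intro power_mono) auto
  then show "inner u ((S ** S) *v u) \<le> (norm u)^2 * trace (S ** S)"
    by (simp add: eq trace_sq_sym[OF assms] power_mult_distrib mult.commute)
qed

lemma quad_mexp_le:
  assumes "sym_mat (D::real^'d^'d)"
  shows "inner u (mexp D *v u) \<le> (norm u)^2 * trace (mexp D)"
    and "0 \<le> inner u (mexp D *v u)"
proof -
  have s: "sym_mat (mexp ((1/2) *\<^sub>R D))" by (intro sym_mexp sym_scale assms)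
  show "inner u (mexp D *v u) \<le> (norm u)^2 * trace (mexp D)"
    using quad_psd_le(2)[OF s, of u] by (simp add: mexp_half[symmetric])
  show "0 \<le> inner u (mexp D *v u)"
    using quad_psd_le(1)[OF s, of u] by (simp add: mexp_half[symmetric])
qed




definition fq :: "real^'d \<Rightarrow> real^'d^'d \<Rightarrow> real" where
  "fq u E = inner u (mexp E *v u)"

lemma fq_sq:
  assumes "sym_mat (E::real^'d^'d)" "norm u = 1"
  shows "(fq u E)^2 \<le> fq u (2 *\<^sub>R E)"
proof -
  have s: "sym_mat (mexp E)" by (rule sym_mexp[OF assms(1)])
  have "mexp (2 *\<^sub>R E) = mexp E ** mexp E"
    using mexp_split[of 1 1 E] by simp
  then have eq: "fq u (2 *\<^sub>R E) = (norm (mexp E *v u))^2"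
    unfolding fq_def by (simp add: quad_psd_le(1)[OF s])
  have "\<bar>fq u E\<bar> \<le> norm u * norm (mexp E *v u)"
    unfolding fq_def by (rule Cauchy_Schwarz_ineq2)
  then have "\<bar>fq u E\<bar>^2 \<le> (norm (mexp E *v u))^2"
    using assms(2) by (intro power_mono) auto
  then show ?thesis by (simp add: eq)
qed

lemma fq_nonneg: "sym_mat (E::real^'d^'d) \<Longrightarrow> 0 \<le> fq u E"
  unfolding fq_def by (rule quad_mexp_le(2))

lemma fq_iter:
  assumes "norm u = 1"
  shows "sym_mat (E::real^'d^'d) \<Longrightarrow> (fq u E)^(2^k) \<le> fq u ((2^k) *\<^sub>R E)"
proof (induction k arbitrary: E)
  case 0 then show ?case by simp
next
  case (Suc k)
  have s2: "sym_mat (2 *\<^sub>R E)" by (rule sym_scale[OF Suc.prems])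
  have "(fq u E)^(2^Suc k) = ((fq u E)^2)^(2^k)"
    by (simp add: power_mult[symmetric] mult.commute)
  also have "\<dots> \<le> (fq u (2 *\<^sub>R E))^(2^k)"
    by (intro power_mono fq_sq Suc.prems assms) simp
  also have "\<dots> \<le> fq u ((2^k) *\<^sub>R (2 *\<^sub>R E))"
    by (rule Suc.IH[OF s2])
  also have "(2::real)^k *\<^sub>R (2 *\<^sub>R E) = (2^Suc k) *\<^sub>R E"
    by (simp add: mult.commute)
  finally show ?case .
qed

lemma norm_matpow_Suc: "norm (matpow (A::real^'d^'d) (Suc n)) \<le> norm A ^ Suc n"
proof (induction n)
  case 0 then show ?case by simp
next
  case (Suc n)
  have "norm (matpow A (Suc (Suc n))) \<le> norm A * norm (matpow A (Suc n))"
    by (simp only: matpow.simps norm_mat_mult)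
  also have "\<dots> \<le> norm A * norm A ^ Suc n"
    by (intro mult_left_mono Suc.IH) auto
  finally show ?case by simp
qed

lemma fact_ge_pow2: "(2::real)^(i+1) \<le> fact (i+2)"
proof (induction i)
  case 0 then show ?case by simp
next
  case (Suc i)
  have "(2::real)^(Suc i + 1) = 2 * 2^(i+1)" by simp
  also have "\<dots> \<le> 2 * fact (i+2)" using Suc.IH by (intro mult_left_mono) auto
  also have "\<dots> \<le> of_nat (Suc i + 2) * fact (i+2)"
    by (intro mult_right_mono) auto
  also have "\<dots> = fact (Suc i + 2)"
  proof -
    have "fact (Suc i + 2) = (of_nat (Suc (i+2)) :: real) * fact (i+2)"
      by (metis add_Suc fact_Suc)
    then show ?thesis by simp
  qed
  finally show ?case .
qed

lemma bl_quad: "bounded_linear (\<lambda>M::real^'d^'d. inner u (M *v u))"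
proof -
  have "linear (\<lambda>M::real^'d^'d. inner u (M *v u))"
    by (rule linearI) (simp_all add: matrix_vector_mult_add_rdistrib inner_add_right
        scaleR_matrix_vector_assoc[symmetric])
  then show ?thesis by (simp add: linear_conv_bounded_linear)
qed

lemma quad_abs_le: "norm u = 1 \<Longrightarrow> \<bar>inner u ((M::real^'d^'d) *v u)\<bar> \<le> norm M"
proof -
  assume u: "norm u = 1"
  have "\<bar>inner u (M *v u)\<bar> \<le> norm u * norm (M *v u)" by (rule Cauchy_Schwarz_ineq2)
  also have "\<dots> \<le> norm M * norm u" using u norm_mat_vec[of M u] by simp
  finally show ?thesis using u by simp
qed

lemma fq_lower:
  assumes u: "norm u = 1" and t: "norm (E::real^'d^'d) \<le> 1"
  shows "1 + inner u (E *v u) - ((norm E)^2) \<le> fq u E"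
proof -
  define c where "c n = inner u (((1 / fact n) *\<^sub>R matpow E n) *v u)" for n
  have cs: "c sums fq u E"
    unfolding c_def fq_def by (rule bl_mexp_sums[OF bl_quad])
  have c0: "c 0 = 1" using u by (simp add: c_def power2_norm_eq_inner[symmetric])
  have c1: "c 1 = inner u (E *v u)" by (simp add: c_def)
  have sh: "(\<lambda>i. c (i + 2)) sums (fq u E - (1 + inner u (E *v u)))"
    using cs c0 c1 by (subst sums_iff_shift) (simp add: numeral_2_eq_2)
  have g: "(\<lambda>i. (norm E)^2 * (1/2) * (1/2)^i) sums ((norm E)^2 * (1/2) * (1 / (1 - 1/2)))"
    by (intro sums_mult geometric_sums) simp
  have g': "(\<lambda>i. - ((norm E)^2 * (1/2) * (1/2)^i)) sums (- ((norm E)^2))"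
    using sums_minus[OF g] by simp
  have le: "- ((norm E)^2 * (1/2) * (1/2)^i) \<le> c (i + 2)" for i
  proof -
    have "\<bar>c (i+2)\<bar> = \<bar>inner u (matpow E (i+2) *v u)\<bar> / fact (i+2)"
      by (simp add: c_def scaleR_matrix_vector_assoc[symmetric])
    also have "\<dots> \<le> norm (matpow E (i+2)) / fact (i+2)"
      by (intro divide_right_mono quad_abs_le u) auto
    also have "\<dots> \<le> (norm E)^(i+2) / fact (i+2)"
      using norm_matpow_Suc[of E "i+1"] by (intro divide_right_mono) auto
    also have "\<dots> \<le> (norm E)^2 / 2^(i+1)"
    proof -
      have "(norm E)^(i+2) = (norm E)^2 * (norm E)^i" by (simp only: power_add mult.commute)
      also have "\<dots> \<le> (norm E)^2 * 1" using t by (intro mult_left_mono power_le_one) auto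
      finally have a: "(norm E)^(i+2) \<le> (norm E)^2" by simp
      show ?thesis
        by (rule frac_le) (use a fact_ge_pow2[of i] in auto)
    qed
    also have "\<dots> = (norm E)^2 * (1/2) * (1/2)^i"
      by (simp add: power_divide field_simps)
    finally show ?thesis by linarith
  qed
  have "- ((norm E)^2) \<le> fq u E - (1 + inner u (E *v u))"
    by (rule sums_le[OF le g' sh])
  then show ?thesis by linarith
qed

lemma key_unit:
  assumes D: "sym_mat (D::real^'d^'d)" and u: "norm u = 1"
  shows "inner u (D *v u) \<le> fq u D"
proof -
  define a where "a = inner u (D *v u)"
  define c where "c = (norm D)^2"
  obtain k where k: "norm D + 2 * \<bar>a\<bar> + 2 * c + 2 < (2::real)^k"
    using real_arch_pow[of 2 "norm D + 2 * \<bar>a\<bar> + 2 * c + 2"] by auto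
  define N where "N = (2::real)^k"
  have Npos: "N > 0" by (simp add: N_def)
  have N1: "N \<ge> 1" using k c_def unfolding N_def by (smt (verit) norm_ge_zero zero_le_power2)
  define E where "E = (1/N) *\<^sub>R D"
  have Es: "sym_mat E" unfolding E_def by (rule sym_scale[OF D])
  have nE: "norm E = norm D / N" using Npos by (simp add: E_def)
  have nE1: "norm E \<le> 1" using nE Npos k unfolding N_def
    by (simp add: divide_le_eq_1) (smt (verit) c_def zero_le_power2 norm_ge_zero)
  have qE: "inner u (E *v u) = a / N"
    by (simp add: E_def a_def scaleR_matrix_vector_assoc[symmetric])
  have nE2: "(norm E)^2 = c / N^2" by (simp add: nE c_def power_divide)
  define b where "b = a / N - c / N^2"
  have fE: "1 + b \<le> fq u E"
    using fq_lower[OF u nE1] qE nE2 by (simp add: b_def)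
  have c0: "c \<ge> 0" by (simp add: c_def)
  have kk: "2 * \<bar>a\<bar> \<le> N" "2 * c \<le> N" using k c0 norm_ge_zero[of D] unfolding N_def by linarith+
  have ha: "\<bar>a\<bar> / N \<le> 1/2" using kk Npos by (simp add: field_simps)
  have hc: "c / N \<le> 1/2" using kk Npos by (simp add: field_simps)
  have hc2: "c / N^2 \<le> c / N"
    using N1 c0 by (intro divide_left_mono) (auto simp: power2_eq_square)
  have "a / N \<ge> - (\<bar>a\<bar> / N)" using Npos by (simp add: field_simps)
  then have bge: "-1 \<le> b" using ha hc hc2 unfolding b_def by linarith
  have "1 + of_nat (2^k) * b \<le> (1 + b)^(2^k)"
    by (rule Bernoulli_inequality[OF bge])
  also have "\<dots> \<le> (fq u E)^(2^k)"
    by (intro power_mono fE) (use bge in simp)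
  also have "\<dots> \<le> fq u ((2^k) *\<^sub>R E)"
    by (rule fq_iter[OF u Es])
  also have "(2::real)^k *\<^sub>R E = D"
    using Npos by (simp add: E_def N_def)
  finally have "1 + N * b \<le> fq u D" by (simp add: N_def)
  moreover have "N * b = a - c / N"
    using Npos by (simp add: b_def field_simps power2_eq_square)
  ultimately show ?thesis using hc c0 unfolding a_def by linarith
qed

lemma key_quad:
  assumes D: "sym_mat (D::real^'d^'d)"
  shows "inner u (D *v u) \<le> (norm u)^2 * trace (mexp D)"
proof (cases "u = 0")
  case True then show ?thesis by simp
next
  case False
  define v where "v = (1 / norm u) *\<^sub>R u"
  have nv: "norm v = 1" using False by (simp add: v_def)
  have uv: "u = norm u *\<^sub>R v" using False by (simp add: v_def)
  have "inner u (D *v u) = (norm u)^2 * inner v (D *v v)"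
    by (subst (1 2) uv) (simp add: matrix_vector_mult_scaleR power2_eq_square)
  also have "\<dots> \<le> (norm u)^2 * fq v D"
    by (intro mult_left_mono key_unit D nv) simp
  also have "\<dots> \<le> (norm u)^2 * trace (mexp D)"
    using quad_mexp_le(1)[OF D, of v] nv by (intro mult_left_mono) (simp_all add: fq_def)
  finally show ?thesis .
qed




lemma tr_prod_nonneg:
  assumes A: "sym_mat (A::real^'d^'d)" and B: "sym_mat B"
  shows "0 \<le> trace (mexp A ** mexp (- B))"
proof -
  define S where "S = mexp ((1/2) *\<^sub>R A)"
  define T where "T = mexp ((-1/2) *\<^sub>R B)"
  have Ss: "sym_mat S" unfolding S_def by (intro sym_mexp sym_scale A)
  have Ts: "sym_mat T" unfolding T_def by (intro sym_mexp sym_scale B)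
  have eA: "mexp A = S ** S" unfolding S_def by (rule mexp_half)
  have enB: "mexp (- B) = T ** T"
    unfolding T_def using mexp_split[of "-1/2" "-1/2" B] by simp
  have "trace (mexp A ** mexp (- B)) = trace (((S ** S) ** T) ** T)"
    by (simp add: eA enB matrix_mul_assoc)
  also have "\<dots> = trace (T ** ((S ** S) ** T))"
    by (rule trace_mul_sym)
  also have "\<dots> = trace (transpose (S ** T) ** (S ** T))"
    using Ss Ts by (simp add: matrix_transpose_mul sym_mat_def matrix_mul_assoc)
  also have "\<dots> = (norm (S ** T))^2" by (rule trace_tsq)
  finally show ?thesis by simp
qed

lemma iter_mono_le:
  assumes inc: "\<forall>t. t \<le> h t"
  shows "m \<le> n \<Longrightarrow> (h ^^ m) (t::real) \<le> (h ^^ n) t"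
proof (induction n)
  case 0 then show ?case by simp
next
  case (Suc n)
  show ?case
  proof (cases "m = Suc n")
    case True then show ?thesis by simp
  next
    case False
    then have "m \<le> n" using Suc.prems by simp
    then have "(h ^^ m) t \<le> (h ^^ n) t" by (rule Suc.IH)
    also have "\<dots> \<le> (h ^^ Suc n) t" using inc by simp
    finally show ?thesis .
  qed
qed

lemma iter_mono:
  assumes mono: "mono (h :: real \<Rightarrow> real)"
  shows "s \<le> t \<Longrightarrow> (h ^^ n) s \<le> (h ^^ n) t"
  by (induction n) (simp_all add: monoD[OF mono])

lemma graph_bound:
  fixes E :: "('v::finite \<times> 'v) set" and g :: "'v \<Rightarrow> real" and h :: "real \<Rightarrow> real"
  assumes acyc: "acyclic E"
    and mono: "mono h" and inc: "\<forall>t. t \<le> h t"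
    and step: "\<forall>v w. (v, w) \<in> E \<longrightarrow> g v \<le> h (g w)"
    and bd: "\<forall>v\<in>\<Gamma>. g v \<le> T"
    and succ: "\<forall>v. v \<notin> \<Gamma> \<longrightarrow> (\<exists>w. (v, w) \<in> E)"
  shows "g v \<le> (h ^^ CARD('v)) T"
proof -
  define c where "c v = card {w. (v, w) \<in> E\<^sup>+}" for v
  have wf: "wf (E\<inverse>)"
    by (rule finite_acyclic_wf) (simp_all add: acyc)
  have claim: "g v \<le> (h ^^ c v) T" for v
  proof (induction v rule: wf_induct[OF wf])
    case (1 v)
    show ?case
    proof (cases "v \<in> \<Gamma>")
      case True
      then have "g v \<le> T" using bd by auto
      also have "T \<le> (h ^^ c v) T" using iter_mono_le[OF inc, of 0 "c v"] by simp
      finally show ?thesis .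
    next
      case False
      then obtain w where vw: "(v, w) \<in> E" using succ by auto
      then have IH: "g w \<le> (h ^^ c w) T" using 1 by auto
      have sub: "{w'. (w, w') \<in> E\<^sup>+} \<subset> {w'. (v, w') \<in> E\<^sup>+}"
      proof
        show "{w'. (w, w') \<in> E\<^sup>+} \<subseteq> {w'. (v, w') \<in> E\<^sup>+}"
          using vw by (auto intro: trancl_into_trancl2)
        have "(w, w) \<notin> E\<^sup>+" using acyc by (simp add: acyclic_def)
        moreover have "(v, w) \<in> E\<^sup>+" using vw by auto
        ultimately show "{w'. (w, w') \<in> E\<^sup>+} \<noteq> {w'. (v, w') \<in> E\<^sup>+}" by auto
      qed
      have "c w < c v" unfolding c_def by (rule psubset_card_mono) (simp_all add: sub)
      have "g v \<le> h (g w)" using step vw by auto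
      also have "\<dots> \<le> h ((h ^^ c w) T)" using IH monoD[OF mono] by auto
      also have "\<dots> = (h ^^ Suc (c w)) T" by simp
      also have "\<dots> \<le> (h ^^ c v) T" by (rule iter_mono_le[OF inc]) (use \<open>c w < c v\<close> in simp)
      finally show ?thesis .
    qed
  qed
  have "c v \<le> CARD('v)" unfolding c_def by (rule card_mono) auto
  then show ?thesis using claim[of v] iter_mono_le[OF inc, of "c v" "CARD('v)" T] by linarith
qed

lemma quad_axis: "inner (axis i 1) ((X::real^'d^'d) *v axis j 1) = X$i$j"
  by (simp add: matrix_vector_mult_basis inner_axis' column_def)

lemma entries_bound:
  assumes X: "sym_mat (X::real^'d^'d)"
    and K: "\<And>u. \<bar>inner u (X *v u)\<bar> \<le> (norm u)^2 * K"
  shows "\<bar>X$i$j\<bar> \<le> 2 * K"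
proof -
  have Kii: "\<bar>X$k$k\<bar> \<le> K" for k using K[of "axis k 1"] by (simp add: quad_axis)
  then have K0: "0 \<le> K" by (meson abs_ge_zero order_trans)
  show ?thesis
  proof (cases "i = j")
    case True then show ?thesis using Kii[of i] K0 by simp
  next
    case False
    define u where "u = axis i (1::real) + axis j 1"
    have Xji: "X$j$i = X$i$j" using X unfolding sym_mat_def
      by (metis transpose_def vec_lambda_beta)
    have q: "inner u (X *v u) = X$i$i + X$j$j + 2 * X$i$j"
      unfolding u_def
      by (simp add: matrix_vector_right_distrib inner_add_left inner_add_right quad_axis Xji)
    have nu: "(norm u)^2 = 2"
      unfolding u_def power2_norm_eq_inner using False
      by (simp add: inner_add_left inner_add_right inner_axis_axis)
    have "\<bar>X$i$i + X$j$j + 2 * X$i$j\<bar> \<le> 2 * K" using K[of u] q nu by simp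
    then show ?thesis using Kii[of i] Kii[of j] by linarith
  qed
qed

lemma sym_add: "sym_mat A \<Longrightarrow> sym_mat B \<Longrightarrow> sym_mat ((A::real^'d^'d) + B)"
  by (simp add: sym_mat_def transpose_def vec_eq_iff)

lemma SymV_add: "x \<in> SymV \<Longrightarrow> y \<in> SymV \<Longrightarrow> x + y \<in> SymV"
  by (simp add: SymV_def sym_add)

lemma SymV_scale: "x \<in> SymV \<Longrightarrow> c *\<^sub>R x \<in> SymV"
  by (simp add: SymV_def sym_scale)

lemma SymV_zero: "0 \<in> SymV"
  by (simp add: SymV_def sym_mat_def transpose_def vec_eq_iff)

lemma SymV_sum: "finite P \<Longrightarrow> (\<forall>p\<in>P. f p \<in> SymV) \<Longrightarrow> sum f P \<in> SymV"
  by (induction P rule: finite_induct) (simp_all add: SymV_zero SymV_add)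

lemma norm_on_zero: "is_norm_on SymV N \<Longrightarrow> N 0 = 0"
  unfolding is_norm_on_def using SymV_zero by auto

lemma norm_on_sum:
  assumes N: "is_norm_on SymV N"
  shows "finite P \<Longrightarrow> (\<forall>p\<in>P. f p \<in> SymV) \<Longrightarrow> N (sum f P) \<le> (\<Sum>p\<in>P. N (f p))"
proof (induction P rule: finite_induct)
  case empty then show ?case using norm_on_zero[OF N] by simp
next
  case (insert p P)
  have "N (sum f (insert p P)) = N (f p + sum f P)" using insert by simp
  also have "\<dots> \<le> N (f p) + N (sum f P)"
    using N insert SymV_sum[of P f] unfolding is_norm_on_def by auto
  also have "\<dots> \<le> N (f p) + (\<Sum>p\<in>P. N (f p))" using insert by simp
  finally show ?case using insert by simp
qed

lemma delta3: "(\<Sum>v\<in>(UNIV::'v::finite set). \<Sum>i\<in>(UNIV::'d::finite set). \<Sum>j\<in>(UNIV::'d set). (c v i j::real) * (if w = v \<and> a = i \<and> b = j then 1 else 0)) = c w a b"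
proof -
  have 1: "\<And>v i. (\<Sum>j\<in>(UNIV::'d set). (c v i j::real) * (if w = v \<and> a = i \<and> b = j then 1 else 0)) = (if w = v \<and> a = i then c v i b else 0)"
  proof -
    fix v i
    have "(\<Sum>j\<in>(UNIV::'d set). (c v i j::real) * (if w = v \<and> a = i \<and> b = j then 1 else 0)) = (\<Sum>j\<in>UNIV. if b = j then (if w = v \<and> a = i then c v i j else 0) else 0)"
      by (intro sum.cong) auto
    then show "?thesis v i" by simp
  qed
  have 2: "\<And>v. (\<Sum>i\<in>(UNIV::'d set). if w = v \<and> a = i then c v i b else 0) = (if w = v then c v a b else 0)"
    by (case_tac "w = v") simp_all
  show ?thesis by (simp add: 1 2)
qed
definition Fb :: "'v \<Rightarrow> 'd \<Rightarrow> 'd \<Rightarrow> real^'d^'d^'v" where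
  "Fb v i j = (\<chi> w a b. ((if w = v \<and> a = i \<and> b = j then 1 else 0) + (if w = v \<and> b = i \<and> a = j then 1 else 0)) / 2)"

lemma Fb_SymV: "(Fb v i j :: real^'d::finite^'d^'v::finite) \<in> SymV"
  unfolding SymV_def sym_mat_def
proof (intro CollectI allI iffD2[OF vec_eq_iff])
  fix w a b
  show "transpose ((Fb v i j :: real^'d::finite^'d^'v::finite) $ w) $ a $ b = Fb v i j $ w $ a $ b"
    by (simp add: transpose_def Fb_def add.commute)
qed

lemma decomp:
  assumes "x \<in> SymV"
  shows "x = (\<Sum>v\<in>UNIV. \<Sum>i\<in>UNIV. \<Sum>j\<in>UNIV. x$v$i$j *\<^sub>R (Fb v i j :: real^'d::finite^'d^'v::finite))"
proof -
  have s: "x$w$b$a = x$w$a$b" for w a b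
  proof -
    have "transpose (x$w) = x$w" using assms by (simp add: SymV_def sym_mat_def)
    then have "(transpose (x$w))$a$b = x$w$a$b" by simp
    then show ?thesis by (simp add: transpose_def)
  qed
  have comp: "(\<Sum>v\<in>UNIV. \<Sum>i\<in>UNIV. \<Sum>j\<in>UNIV. x$v$i$j *\<^sub>R (Fb v i j :: real^'d::finite^'d^'v::finite))$w$a$b = x$w$a$b" for w a b
  proof -
    have pt: "x$v$i$j * (Fb v i j :: real^'d::finite^'d^'v::finite)$w$a$b
      = (x$v$i$j * (if w = v \<and> a = i \<and> b = j then 1 else 0)) / 2 + (x$v$i$j * (if w = v \<and> b = i \<and> a = j then 1 else 0)) / 2" for v i j
      by (simp add: Fb_def add_divide_distrib distrib_left)
    have "(\<Sum>v\<in>UNIV. \<Sum>i\<in>UNIV. \<Sum>j\<in>UNIV. x$v$i$j *\<^sub>R (Fb v i j :: real^'d::finite^'d^'v::finite))$w$a$b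
       = (\<Sum>v\<in>UNIV. \<Sum>i\<in>UNIV. \<Sum>j\<in>UNIV. x$v$i$j * (Fb v i j :: real^'d::finite^'d^'v::finite)$w$a$b)"
      by simp
    also have "\<dots> = (\<Sum>v\<in>UNIV. \<Sum>i\<in>UNIV. \<Sum>j\<in>UNIV. x$v$i$j * (if w = v \<and> a = i \<and> b = j then 1 else 0)) / 2
        + (\<Sum>v\<in>UNIV. \<Sum>i\<in>UNIV. \<Sum>j\<in>UNIV. x$v$i$j * (if w = v \<and> b = i \<and> a = j then 1 else 0)) / 2"
      by (simp only: pt sum.distrib sum_divide_distrib)
    also have "\<dots> = x$w$a$b / 2 + x$w$b$a / 2"
      by (simp only: delta3)
    finally show ?thesis using s by simp
  qed
  show ?thesis
    by (intro iffD2[OF vec_eq_iff] allI) (simp only: comp)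
qed



lemma quad_abs_le_gen: "\<bar>inner u ((X::real^'d^'d) *v u)\<bar> \<le> (norm u)^2 * norm X"
proof -
  have "\<bar>inner u (X *v u)\<bar> \<le> norm u * norm (X *v u)" by (rule Cauchy_Schwarz_ineq2)
  also have "\<dots> \<le> norm u * (norm X * norm u)"
    by (intro mult_left_mono norm_mat_vec) simp
  finally show ?thesis by (simp add: power2_eq_square mult_ac)
qed

lemma neg_mv: "(- (X::real^'d^'d)) *v u = - (X *v u)"
  by (simp add: matrix_vector_mult_def vec_eq_iff sum_negf)

lemma norm_bound:
  assumes N: "is_norm_on SymV N" and x: "x \<in> SymV" and B: "\<forall>v i j. \<bar>x$v$i$j\<bar> \<le> B"
  shows "N x \<le> B * (\<Sum>v\<in>UNIV. \<Sum>i\<in>UNIV. \<Sum>j\<in>UNIV. N (Fb v i j :: real^'d::finite^'d^'v::finite))"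
proof -
  have mem: "x$v$i$j *\<^sub>R (Fb v i j :: real^'d::finite^'d^'v::finite) \<in> SymV" for v i j
    by (intro SymV_scale Fb_SymV)
  have mem2: "(\<Sum>j\<in>UNIV. x$v$i$j *\<^sub>R (Fb v i j :: real^'d::finite^'d^'v::finite)) \<in> SymV" for v i
    by (intro SymV_sum) (simp_all add: mem)
  have mem3: "(\<Sum>i\<in>UNIV. \<Sum>j\<in>UNIV. x$v$i$j *\<^sub>R (Fb v i j :: real^'d::finite^'d^'v::finite)) \<in> SymV" for v
    by (intro SymV_sum) (simp_all add: mem2)
  have Fnn: "0 \<le> N (Fb v i j :: real^'d::finite^'d^'v::finite)" for v i j
    using N Fb_SymV unfolding is_norm_on_def by blast
  have "N x = N (\<Sum>v\<in>UNIV. \<Sum>i\<in>UNIV. \<Sum>j\<in>UNIV. x$v$i$j *\<^sub>R (Fb v i j :: real^'d::finite^'d^'v::finite))"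
    using decomp[OF x] by simp
  also have "\<dots> \<le> (\<Sum>v\<in>UNIV. N (\<Sum>i\<in>UNIV. \<Sum>j\<in>UNIV. x$v$i$j *\<^sub>R (Fb v i j :: real^'d::finite^'d^'v::finite)))"
    by (rule norm_on_sum[OF N]) (simp_all add: mem3)
  also have "\<dots> \<le> (\<Sum>v\<in>UNIV. \<Sum>i\<in>UNIV. N (\<Sum>j\<in>UNIV. x$v$i$j *\<^sub>R (Fb v i j :: real^'d::finite^'d^'v::finite)))"
    by (intro sum_mono norm_on_sum[OF N]) (simp_all add: mem2)
  also have "\<dots> \<le> (\<Sum>v\<in>UNIV. \<Sum>i\<in>UNIV. \<Sum>j\<in>UNIV. N (x$v$i$j *\<^sub>R (Fb v i j :: real^'d::finite^'d^'v::finite)))"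
    by (intro sum_mono norm_on_sum[OF N]) (simp_all add: mem)
  also have "\<dots> = (\<Sum>v\<in>UNIV. \<Sum>i\<in>UNIV. \<Sum>j\<in>UNIV. \<bar>x$v$i$j\<bar> * N (Fb v i j :: real^'d::finite^'d^'v::finite))"
  proof -
    have sc: "N (c *\<^sub>R (Fb v i j :: real^'d::finite^'d^'v::finite)) = \<bar>c\<bar> * N (Fb v i j)" for c v i j
      using N Fb_SymV unfolding is_norm_on_def by blast
    show ?thesis by (simp only: sc)
  qed
  also have "\<dots> \<le> (\<Sum>v\<in>UNIV. \<Sum>i\<in>UNIV. \<Sum>j\<in>UNIV. B * N (Fb v i j :: real^'d::finite^'d^'v::finite))"
    by (intro sum_mono mult_right_mono B[rule_format] Fnn)
  also have "\<dots> = B * (\<Sum>v\<in>UNIV. \<Sum>i\<in>UNIV. \<Sum>j\<in>UNIV. N (Fb v i j :: real^'d::finite^'d^'v::finite))"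
    by (simp add: sum_distrib_left)
  finally show ?thesis .
qed

lemma iter_add: "((\<lambda>t. t + c) ^^ n) (t0::real) = t0 + of_nat n * c"
  by (induction n) (simp_all add: algebra_simps)


lemma phi_part:
  fixes E :: "('v::finite \<times> 'v) set"
    and \<Gamma> :: "'v set"
    and z :: "'v \<Rightarrow> real^'d::finite^'d"
    and N :: "real^'d^'d^'v \<Rightarrow> real"
  assumes acyc: "acyclic E"
    and sinks: "\<forall>v. is_sink E v \<longrightarrow> v \<in> \<Gamma>"
    and sources: "\<forall>v. is_source E v \<longrightarrow> v \<in> \<Gamma>"
    and zsym: "\<forall>v\<in>\<Gamma>. sym_mat (z v)"
    and norm: "is_norm_on SymV N"
  shows "\<exists>R. \<forall>x\<in>SymV_bd \<Gamma> z. N x > R \<longrightarrow> phi E x > M"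
proof -
  define Mx where "Mx = max M 1"
  define h where "h t = Mx * max t 0" for t :: real
  define T1 where "T1 = (\<Sum>v\<in>\<Gamma>. trace (mexp (z v)))"
  define T2 where "T2 = (\<Sum>v\<in>\<Gamma>. trace (mexp (- z v)))"
  define K where "K = max ((h ^^ CARD('v)) T1) ((h ^^ CARD('v)) T2)"
  define R where "R = (2 * K) * (\<Sum>v\<in>UNIV. \<Sum>i\<in>UNIV. \<Sum>j\<in>UNIV. N (Fb v i j :: real^'d^'d^'v))"
  have Mx1: "1 \<le> Mx" by (simp add: Mx_def)
  have hmono: "mono h" unfolding h_def using Mx1
    by (intro monoI mult_left_mono) auto
  have hinc: "\<forall>t. t \<le> h t"
  proof
    fix t show "t \<le> h t"
    proof (cases "t \<le> 0")
      case True then show ?thesis using Mx1 by (simp add: h_def)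
    next
      case False
      then have "1 * t \<le> Mx * t" using Mx1 by (intro mult_right_mono) auto
      then show ?thesis using False by (simp add: h_def)
    qed
  qed
  have succ: "\<forall>v. v \<notin> \<Gamma> \<longrightarrow> (\<exists>w. (v, w) \<in> E)" using sinks unfolding is_sink_def by blast
  have pred: "\<forall>v. v \<notin> \<Gamma> \<longrightarrow> (\<exists>w. (v, w) \<in> E\<inverse>)" using sources unfolding is_source_def by blast
  show ?thesis
  proof (intro exI[of _ R] ballI impI)
    fix x assume xin: "x \<in> SymV_bd \<Gamma> z" and NR: "N x > R"
    have xs: "sym_mat (x$v)" for v using xin by (simp add: SymV_bd_def SymV_def)
    have xz: "v \<in> \<Gamma> \<Longrightarrow> x$v = z v" for v using xin by (simp add: SymV_bd_def)
    have xS: "x \<in> SymV" using xin by (simp add: SymV_bd_def)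
    show "phi E x > M"
    proof (rule ccontr)
      assume "\<not> phi E x > M"
      then have phM: "phi E x \<le> M" by simp
      define t where "t v w = trace (mexp (x$v) ** mexp (- (x$w)))" for v w
      have tnn: "0 \<le> t v w" for v w unfolding t_def by (intro tr_prod_nonneg xs)
      have tle: "(v, w) \<in> E \<Longrightarrow> t v w \<le> Mx" for v w
      proof -
        assume vw: "(v, w) \<in> E"
        have "t v w = (\<lambda>(v, w). t v w) (v, w)" by simp
        also have "\<dots> \<le> (\<Sum>p\<in>E. (\<lambda>(v, w). t v w) p)"
          by (rule member_le_sum) (use vw tnn in auto)
        also have "\<dots> = phi E x" by (simp add: phi_def t_def)
        finally show ?thesis using phM by (simp add: Mx_def)
      qed
      have b1: "trace (mexp (x$v)) \<le> (h ^^ CARD('v)) T1" for v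
      proof (rule graph_bound[OF acyc hmono hinc _ _ succ])
        show "\<forall>v w. (v, w) \<in> E \<longrightarrow> trace (mexp (x$v)) \<le> h (trace (mexp (x$w)))"
        proof (intro allI impI)
          fix v w assume vw: "(v, w) \<in> E"
          have "trace (mexp (x$v)) \<le> t v w * trace (mexp (x$w))"
            unfolding t_def by (rule tr_ratio[OF xs xs])
          also have "\<dots> \<le> Mx * trace (mexp (x$w))"
            by (intro mult_right_mono tle vw trace_mexp_nonneg xs)
          finally show "trace (mexp (x$v)) \<le> h (trace (mexp (x$w)))"
            using trace_mexp_nonneg[OF xs, of w] by (simp add: h_def)
        qed
        show "\<forall>v\<in>\<Gamma>. trace (mexp (x$v)) \<le> T1"
        proof
          fix v assume v: "v \<in> \<Gamma>"
          show "trace (mexp (x$v)) \<le> T1"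
            unfolding T1_def xz[OF v]
            by (rule member_le_sum) (use v zsym trace_mexp_nonneg in auto)
        qed
      qed
      have b2: "trace (mexp (- x$v)) \<le> (h ^^ CARD('v)) T2" for v
      proof (rule graph_bound[of "E\<inverse>", OF _ hmono hinc _ _ pred])
        show "acyclic (E\<inverse>)" using acyc by simp
        show "\<forall>v w. (v, w) \<in> E\<inverse> \<longrightarrow> trace (mexp (- x$v)) \<le> h (trace (mexp (- x$w)))"
        proof (intro allI impI)
          fix v w assume vw: "(v, w) \<in> E\<inverse>"
          then have wv: "(w, v) \<in> E" by simp
          have 1: "trace (mexp (- x$v)) \<le> trace (mexp (- x$v) ** mexp (- (- x$w))) * trace (mexp (- x$w))"
            by (rule tr_ratio[OF sym_neg[OF xs] sym_neg[OF xs]])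
          have 2: "trace (mexp (- x$v) ** mexp (- (- x$w))) = t w v"
            unfolding t_def by (simp only: trace_mul_sym[of "mexp (- x$v)"] minus_minus)
          have 3: "t w v * trace (mexp (- x$w)) \<le> Mx * trace (mexp (- x$w))"
            by (intro mult_right_mono tle wv trace_mexp_nonneg sym_neg xs)
          from 1 2 3 have "trace (mexp (- x$v)) \<le> Mx * trace (mexp (- x$w))" by simp
          then show "trace (mexp (- x$v)) \<le> h (trace (mexp (- x$w)))"
            using trace_mexp_nonneg[OF sym_neg[OF xs], of w] by (simp add: h_def)
        qed
        show "\<forall>v\<in>\<Gamma>. trace (mexp (- x$v)) \<le> T2"
        proof
          fix v assume v: "v \<in> \<Gamma>"
          show "trace (mexp (- x$v)) \<le> T2"
            unfolding T2_def xz[OF v]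
            by (rule member_le_sum) (use v zsym trace_mexp_nonneg sym_neg in auto)
        qed
      qed
      have qb: "\<bar>inner u (x$v *v u)\<bar> \<le> (norm u)^2 * K" for u v
      proof -
        have "inner u (x$v *v u) \<le> (norm u)^2 * trace (mexp (x$v))" by (rule key_quad[OF xs])
        also have "\<dots> \<le> (norm u)^2 * K"
          using b1[of v] by (intro mult_left_mono) (auto simp: K_def)
        finally have 1: "inner u (x$v *v u) \<le> (norm u)^2 * K" .
        have "- inner u (x$v *v u) = inner u ((- x$v) *v u)" by (simp add: neg_mv)
        also have "\<dots> \<le> (norm u)^2 * trace (mexp (- x$v))" by (rule key_quad[OF sym_neg[OF xs]])
        also have "\<dots> \<le> (norm u)^2 * K"
          using b2[of v] by (intro mult_left_mono) (auto simp: K_def)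
        finally show ?thesis using 1 by linarith
      qed
      have "\<forall>v i j. \<bar>x$v$i$j\<bar> \<le> 2 * K"
        using entries_bound[OF xs qb] by blast
      then have "N x \<le> R" unfolding R_def by (rule norm_bound[OF norm xS])
      then show False using NR by simp
    qed
  qed
qed

lemma chi_part:
  fixes E :: "('v::finite \<times> 'v) set"
    and \<Gamma> :: "'v set"
    and z :: "'v \<Rightarrow> real^'d::finite^'d"
    and N :: "real^'d^'d^'v \<Rightarrow> real"
  assumes acyc: "acyclic E"
    and sinks: "\<forall>v. is_sink E v \<longrightarrow> v \<in> \<Gamma>"
    and sources: "\<forall>v. is_source E v \<longrightarrow> v \<in> \<Gamma>"
    and norm: "is_norm_on SymV N"
  shows "\<exists>R. \<forall>x\<in>SymV_bd \<Gamma> z. N x > R \<longrightarrow> chi E x > M"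
proof -
  define Mx where "Mx = max M 0"
  define Z where "Z = (\<Sum>v\<in>\<Gamma>. norm (z v))"
  define K where "K = Z + of_nat CARD('v) * Mx"
  define R where "R = (2 * K) * (\<Sum>v\<in>UNIV. \<Sum>i\<in>UNIV. \<Sum>j\<in>UNIV. N (Fb v i j :: real^'d^'d^'v))"
  have Mx0: "0 \<le> Mx" by (simp add: Mx_def)
  have succ: "\<forall>v. v \<notin> \<Gamma> \<longrightarrow> (\<exists>w. (v, w) \<in> E)" using sinks unfolding is_sink_def by blast
  have pred: "\<forall>v. v \<notin> \<Gamma> \<longrightarrow> (\<exists>w. (v, w) \<in> E\<inverse>)" using sources unfolding is_source_def by blast
  show ?thesis
  proof (intro exI[of _ R] ballI impI)
    fix x assume xin: "x \<in> SymV_bd \<Gamma> z" and NR: "N x > R"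
    have xs: "sym_mat (x$v)" for v using xin by (simp add: SymV_bd_def SymV_def)
    have xz: "v \<in> \<Gamma> \<Longrightarrow> x$v = z v" for v using xin by (simp add: SymV_bd_def)
    have xS: "x \<in> SymV" using xin by (simp add: SymV_bd_def)
    show "chi E x > M"
    proof (rule ccontr)
      assume "\<not> chi E x > M"
      then have chM: "chi E x \<le> M" by simp
      define t where "t v w = trace (mexp (x$v - x$w))" for v w
      have tnn: "0 \<le> t v w" for v w unfolding t_def by (intro trace_mexp_nonneg sym_diff xs)
      have tle: "(v, w) \<in> E \<Longrightarrow> t v w \<le> Mx" for v w
      proof -
        assume vw: "(v, w) \<in> E"
        have "t v w = (\<lambda>(v, w). t v w) (v, w)" by simp
        also have "\<dots> \<le> (\<Sum>p\<in>E. (\<lambda>(v, w). t v w) p)"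
          by (rule member_le_sum) (use vw tnn in auto)
        also have "\<dots> = chi E x" by (simp add: chi_def t_def)
        finally show ?thesis using chM by (simp add: Mx_def)
      qed
      have qb: "\<bar>inner u (x$v *v u)\<bar> \<le> (norm u)^2 * K" for u v
      proof -
        define c where "c = (norm u)^2 * Mx"
        have c0: "0 \<le> c" using Mx0 by (simp add: c_def)
        have hmono: "mono (\<lambda>t::real. t + c)" by (intro monoI) simp
        have hinc: "\<forall>t::real. t \<le> t + c" using c0 by simp
        have stepE: "inner u (x$v *v u) \<le> inner u (x$w *v u) + c" if vw: "(v, w) \<in> E" for v w
        proof -
          have "inner u (x$v *v u) - inner u (x$w *v u) = inner u ((x$v - x$w) *v u)"
            by (simp add: matrix_vector_mult_diff_rdistrib inner_diff_right)
          also have "\<dots> \<le> (norm u)^2 * t v w" unfolding t_def by (intro key_quad sym_diff xs)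
          also have "\<dots> \<le> c" unfolding c_def by (intro mult_left_mono tle vw) simp
          finally show ?thesis by simp
        qed
        have zb: "\<bar>inner u (x$v *v u)\<bar> \<le> (norm u)^2 * Z" if v: "v \<in> \<Gamma>" for v
        proof -
          have "\<bar>inner u (x$v *v u)\<bar> \<le> (norm u)^2 * norm (z v)"
            using quad_abs_le_gen[of u "x$v"] by (simp add: xz[OF v])
          also have "\<dots> \<le> (norm u)^2 * Z"
            unfolding Z_def by (intro mult_left_mono member_le_sum) (use v in auto)
          finally show ?thesis .
        qed
        have it: "((\<lambda>t. t + c) ^^ CARD('v)) ((norm u)^2 * Z) = (norm u)^2 * K"
          by (simp add: iter_add K_def c_def algebra_simps)
        have 1: "inner u (x$v *v u) \<le> (norm u)^2 * K"
        proof -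
          have "inner u (x$v *v u) \<le> ((\<lambda>t. t + c) ^^ CARD('v)) ((norm u)^2 * Z)"
          proof (rule graph_bound[OF acyc hmono hinc _ _ succ])
            show "\<forall>v w. (v, w) \<in> E \<longrightarrow> inner u (x$v *v u) \<le> inner u (x$w *v u) + c"
              using stepE by blast
            show "\<forall>v\<in>\<Gamma>. inner u (x$v *v u) \<le> (norm u)^2 * Z"
              using zb by (meson abs_ge_self order_trans)
          qed
          then show ?thesis by (simp only: it)
        qed
        have 2: "- inner u (x$v *v u) \<le> (norm u)^2 * K"
        proof -
          have "- inner u (x$v *v u) \<le> ((\<lambda>t. t + c) ^^ CARD('v)) ((norm u)^2 * Z)"
          proof (rule graph_bound[of "E\<inverse>", OF _ hmono hinc _ _ pred])
            show "acyclic (E\<inverse>)" using acyc by simp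
            show "\<forall>v w. (v, w) \<in> E\<inverse> \<longrightarrow> - inner u (x$v *v u) \<le> - inner u (x$w *v u) + c"
              using stepE by fastforce
            show "\<forall>v\<in>\<Gamma>. - inner u (x$v *v u) \<le> (norm u)^2 * Z"
              using zb by (meson abs_ge_minus_self order_trans)
          qed
          then show ?thesis by (simp only: it)
        qed
        show ?thesis using 1 2 by linarith
      qed
      have "\<forall>v i j. \<bar>x$v$i$j\<bar> \<le> 2 * K"
        using entries_bound[OF xs qb] by blast
      then have "N x \<le> R" unfolding R_def by (rule norm_bound[OF norm xS])
      then show False using NR by simp
    qed
  qed
qed

theorem mainTheorem14:
  fixes E :: "('v::finite \<times> 'v) set"
    and \<Gamma> :: "'v set"
    and z :: "'v \<Rightarrow> real^'d::finite^'d"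
    and N :: "real^'d^'d^'v \<Rightarrow> real"
  assumes loopfree: "\<forall>v. (v, v) \<notin> E"
    and acyc: "acyclic E"
    and sinks: "\<forall>v. is_sink E v \<longrightarrow> v \<in> \<Gamma>"
    and sources: "\<forall>v. is_source E v \<longrightarrow> v \<in> \<Gamma>"
    and interior: "UNIV - \<Gamma> \<noteq> {}"
    and zsym: "\<forall>v\<in>\<Gamma>. sym_mat (z v)"
    and norm: "is_norm_on SymV N"
  shows "(\<forall>M. \<exists>R. \<forall>x\<in>SymV_bd \<Gamma> z. N x > R \<longrightarrow> phi E x > M)
       \<and> (\<forall>M. \<exists>R. \<forall>x\<in>SymV_bd \<Gamma> z. N x > R \<longrightarrow> chi E x > M)"
  using phi_part[OF acyc sinks sources zsym norm] chi_part[OF acyc sinks sources norm] by blast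


end
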